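(* Let $(P,Q)$ be a smooth solution on $[\tau_1,\tau_2]\times S^1$ of \[ P_{\tau\tau}-e^{-2\tau}P_{\theta\theta}-e^{2P}(Q_\tau^2-e^{-2\tau}Q_\theta^2)=0,\qquad Q_{\tau\tau}-e^{-2\tau}Q_{\theta\theta}+2(P_\tau Q_\tau-e^{-2\tau}P_\theta Q_\theta)=0 . \] Assume $\tau_2\ge\tau_1\ge 2$ and $1\le P(\tau,\theta)\le\tau-1$ for all $(\tau,\theta)\in[\tau_1,\tau_2]\times S^1$. Then $F(\tau)\le F(\tau_1)(\tau_1/\tau)^2$ for all $\tau\in[\tau_1,\tau_2]$.
   Context: $S^1=\mathbb{R}/2\pi\mathbb{Z}$. The function $F$ is \[ F(\tau)=\tfrac12\sup_{\theta\in S^1}\Big[(P_\tau-\tfrac1\tau P+e^{-\tau}P_\theta)^2+e^{2P}(Q_\tau+e^{-\tau}Q_\theta)^2\Big] +\tfrac12\sup_{\theta\in S^1}\Big[(P_\tau-\tfrac1\tau P-e^{-\tau}P_\theta)^2+e^{2P}(Q_\tau-e^{-\tau}Q_\theta)^2\Big]. \] *)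

theory Defs
  imports "HOL-Analysis.Analysis"
begin

text \<open>Functions on the strip [a,b] x R (theta-periodic functions represent functions
on [a,b] x S^1).\<close>

definition smooth_strip :: "real \<Rightarrow> real \<Rightarrow> (real \<Rightarrow> real \<Rightarrow> real) \<Rightarrow> bool" where
  "smooth_strip a b f \<longleftrightarrow>
     (\<exists>D. f \<in> D \<and>
        (\<forall>g\<in>D. continuous_on ({a..b} \<times> UNIV) (\<lambda>(t, x). g t x)
          \<and> (\<exists>gt\<in>D. \<forall>t\<in>{a..b}. \<forall>x.
                ((\<lambda>s. g s x) has_real_derivative gt t x) (at t within {a..b}))
          \<and> (\<exists>gx\<in>D. \<forall>t\<in>{a..b}. \<forall>x.
                ((\<lambda>y. g t y) has_real_derivative gx t x) (at x))))"

definition F_energy ::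
  "(real \<Rightarrow> real \<Rightarrow> real) \<Rightarrow> (real \<Rightarrow> real \<Rightarrow> real) \<Rightarrow> (real \<Rightarrow> real \<Rightarrow> real) \<Rightarrow>
   (real \<Rightarrow> real \<Rightarrow> real) \<Rightarrow> (real \<Rightarrow> real \<Rightarrow> real) \<Rightarrow> real \<Rightarrow> real" where
  "F_energy P Pt Px Qt Qx \<tau> =
     1/2 * (SUP \<theta>. (Pt \<tau> \<theta> - P \<tau> \<theta> / \<tau> + exp (-\<tau>) * Px \<tau> \<theta>)^2
                  + exp (2 * P \<tau> \<theta>) * (Qt \<tau> \<theta> + exp (-\<tau>) * Qx \<tau> \<theta>)^2)
   + 1/2 * (SUP \<theta>. (Pt \<tau> \<theta> - P \<tau> \<theta> / \<tau> - exp (-\<tau>) * Px \<tau> \<theta>)^2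
                  + exp (2 * P \<tau> \<theta>) * (Qt \<tau> \<theta> - exp (-\<tau>) * Qx \<tau> \<theta>)^2)"

end

theory Submission imports Defs begin

lemma deriv_uniq_Icc:
  fixes f :: "real \<Rightarrow> real"
  assumes "a < b" "t \<in> {a..b}"
    and "(f has_real_derivative d1) (at t within {a..b})"
    and "(f has_real_derivative d2) (at t within {a..b})"
  shows "d1 = d2"
  using vector_derivative_unique_within_closed_interval[of a b t f d1 d2] assms
  by (simp add: has_real_derivative_iff_has_vector_derivative)

lemma chain_curve:
  fixes g gt gx :: "real \<Rightarrow> real \<Rightarrow> real"
  assumes dt: "\<forall>t\<in>I. \<forall>x. ((\<lambda>s. g s x) has_real_derivative gt t x) (at t within I)"
    and dx: "\<forall>t\<in>I. \<forall>x. ((\<lambda>y. g t y) has_real_derivative gx t x) (at x)"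
    and cx: "continuous_on (I \<times> UNIV) (\<lambda>(t, x). gx t x)"
    and dg: "(\<gamma> has_real_derivative \<gamma>') (at s within I)"
    and s: "s \<in> I"
  shows "((\<lambda>s. g s (\<gamma> s)) has_real_derivative gt s (\<gamma> s) + \<gamma>' * gx s (\<gamma> s)) (at s within I)"
proof -
  have cb: "continuous_on (I \<times> UNIV) (\<lambda>(t, x). blinfun_mult_right (gx t x))"
    using continuous_on_compose2[OF bounded_linear.continuous_on[OF bounded_linear_blinfun_mult_right continuous_on_id] cx]
    by (auto simp: split_beta)
  have c1: "continuous (at (s, \<gamma> s) within I \<times> UNIV) (\<lambda>(t, x). blinfun_mult_right (gx t x))"
    using cb s by (simp add: continuous_on_eq_continuous_within)
  have "((\<lambda>(t, x). g t x) has_derivative (\<lambda>(tx, ty). gt s (\<gamma> s) * tx + blinfun_mult_right (gx s (\<gamma> s)) ty))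
        (at (s, \<gamma> s) within I \<times> UNIV)"
  proof (rule has_derivative_partialsI)
    show "((\<lambda>x. g x (\<gamma> s)) has_derivative (*) (gt s (\<gamma> s))) (at s within I)"
      using dt s by (simp add: has_field_derivative_def)
    show "((\<lambda>y. g x y) has_derivative blinfun_apply (blinfun_mult_right (gx x y))) (at y within UNIV)"
      if "x \<in> I" "y \<in> UNIV" for x y
      using dx that by (simp add: has_field_derivative_def blinfun_mult_right.rep_eq)
  qed (use c1 in auto)
  then have D2: "((\<lambda>(t, x). g t x) has_derivative
     (\<lambda>(tx, ty). gt s (\<gamma> s) * tx + blinfun_mult_right (gx s (\<gamma> s)) ty))
        (at (s, \<gamma> s) within (\<lambda>s. (s, \<gamma> s)) ` I)"
    by (rule has_derivative_subset) auto
  have "((\<lambda>(t, x). g t x) \<circ> (\<lambda>s. (s, \<gamma> s)) has_derivative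
     (\<lambda>(tx, ty). gt s (\<gamma> s) * tx + blinfun_mult_right (gx s (\<gamma> s)) ty) \<circ> (\<lambda>h. (h, \<gamma>' * h)))
     (at s within I)"
    apply (rule diff_chain_within)
     apply (rule has_derivative_Pair)
      apply (rule has_derivative_ident)
    using dg apply (simp add: has_field_derivative_def)
    using D2 apply simp
    done
  then have "((\<lambda>x. g x (\<gamma> x)) has_derivative
      (\<lambda>x. x * gt s (\<gamma> s) + x * (\<gamma>' * gx s (\<gamma> s)))) (at s within I)"
    by (simp add: o_def blinfun_mult_right.rep_eq algebra_simps)
  moreover have "(\<lambda>x. x * gt s (\<gamma> s) + x * (\<gamma>' * gx s (\<gamma> s))) = (*) (gt s (\<gamma> s) + \<gamma>' * gx s (\<gamma> s))"
    by (auto simp: algebra_simps)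
  ultimately show ?thesis
    by (simp add: has_field_derivative_def)
qed

lemma ftc_sub:
  fixes f f' :: "real \<Rightarrow> real"
  assumes "a \<le> t" "t \<le> b"
    and "\<forall>s\<in>{a..b}. (f has_real_derivative f' s) (at s within {a..b})"
  shows "f t - f a = integral {a..t} f'"
proof -
  have "(f' has_integral (f t - f a)) {a..t}"
  proof (rule fundamental_theorem_of_calculus)
    fix s assume "s \<in> {a..t}"
    then have "(f has_real_derivative f' s) (at s within {a..b})" using assms by auto
    then have "(f has_real_derivative f' s) (at s within {a..t})"
      by (rule has_field_derivative_subset) (use assms in auto)
    then show "(f has_vector_derivative f' s) (at s within {a..t})"
      by (simp add: has_real_derivative_iff_has_vector_derivative)
  qed (use assms in auto)
  then show ?thesis by (simp add: integral_unique)
qed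

lemma cont_slice_t:
  fixes G :: "real \<Rightarrow> real \<Rightarrow> real"
  assumes "continuous_on ({a..b} \<times> UNIV) (\<lambda>(t, x). G t x)" "{c..d} \<subseteq> {a..b}"
  shows "continuous_on {c..d} (\<lambda>s. G s x)"
proof -
  have "continuous_on {a..b} ((\<lambda>(t, x). G t x) \<circ> (\<lambda>s. (s, x)))"
    by (rule continuous_on_compose) (auto intro!: continuous_intros continuous_on_subset[OF assms(1)])
  then show ?thesis using assms(2) by (simp add: o_def continuous_on_subset)
qed

lemma schwarz:
  fixes P Pt Px A B :: "real \<Rightarrow> real \<Rightarrow> real"
  assumes ab: "a < b"
    and dPt: "\<forall>t\<in>{a..b}. \<forall>x. ((\<lambda>s. P s x) has_real_derivative Pt t x) (at t within {a..b})"
    and dPx: "\<forall>t\<in>{a..b}. \<forall>x. ((\<lambda>y. P t y) has_real_derivative Px t x) (at x)"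
    and dA: "\<forall>t\<in>{a..b}. \<forall>x. ((\<lambda>y. Pt t y) has_real_derivative A t x) (at x)"
    and dB: "\<forall>t\<in>{a..b}. \<forall>x. ((\<lambda>s. Px s x) has_real_derivative B t x) (at t within {a..b})"
    and cPt: "continuous_on ({a..b} \<times> UNIV) (\<lambda>(t, x). Pt t x)"
    and cA: "continuous_on ({a..b} \<times> UNIV) (\<lambda>(t, x). A t x)"
    and cB: "continuous_on ({a..b} \<times> UNIV) (\<lambda>(t, x). B t x)"
  shows "\<forall>t\<in>{a..b}. \<forall>x. A t x = B t x"
proof (intro ballI allI)
  fix t x assume t: "t \<in> {a..b}"
  have zero: "integral {a..u} (\<lambda>s. A s x - B s x) = 0" if u: "u \<in> {a..b}" for u
  proof -
    have sub: "{a..u} \<subseteq> {a..b}" using u by auto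
    have i1: "Px u x - Px a x = integral {a..u} (\<lambda>s. B s x)"
      using ftc_sub[of a u b "\<lambda>s. Px s x" "\<lambda>s. B s x"] u dB by auto
    have i2: "P u y - P a y = integral {a..u} (\<lambda>s. Pt s y)" for y
      using ftc_sub[of a u b "\<lambda>s. P s y" "\<lambda>s. Pt s y"] u dPt by auto
    have cA': "continuous_on (UNIV \<times> cbox a u) (\<lambda>(y, s). A s y)"
    proof -
      have im: "(\<lambda>(y, s). (s, y)) ` (UNIV \<times> cbox a u) \<subseteq> {a..b} \<times> UNIV" using sub by auto
      have "continuous_on (UNIV \<times> cbox a u) ((\<lambda>(t, x). A t x) \<circ> (\<lambda>(y, s). (s, y)))"
        apply (rule continuous_on_compose)
         apply (simp add: split_beta case_prod_unfold, intro continuous_intros)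
        apply (rule continuous_on_subset[OF cA im])
        done
      then show ?thesis by (simp add: o_def split_beta)
    qed
    have L: "((\<lambda>y. integral (cbox a u) (\<lambda>s. Pt s y)) has_field_derivative integral (cbox a u) (\<lambda>s. A s x)) (at x within UNIV)"
    proof (rule leibniz_rule_field_derivative[where fx="\<lambda>y s. A s y"])
      fix y s assume "s \<in> cbox a u"
      then have "s \<in> {a..b}" using sub by auto
      then show "((\<lambda>y. Pt s y) has_field_derivative A s y) (at y within UNIV)" using dA by auto
    next
      fix y
      show "(\<lambda>s. Pt s y) integrable_on cbox a u"
        using integrable_continuous_interval[OF cont_slice_t[OF cPt sub]] by simp
    qed (use cA' in auto)
    have "(\<lambda>y. integral (cbox a u) (\<lambda>s. Pt s y)) = (\<lambda>y. P u y - P a y)"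
      using i2 by auto
    with L have L2: "((\<lambda>y. P u y - P a y) has_real_derivative integral {a..u} (\<lambda>s. A s x)) (at x)"
      by simp
    have L3: "((\<lambda>y. P u y - P a y) has_real_derivative Px u x - Px a x) (at x)"
      using dPx u ab by (auto intro!: derivative_intros)
    have "integral {a..u} (\<lambda>s. A s x) = integral {a..u} (\<lambda>s. B s x)"
      using DERIV_unique[OF L2 L3] i1 by simp
    moreover have "(\<lambda>s. A s x) integrable_on {a..u}" "(\<lambda>s. B s x) integrable_on {a..u}"
      using integrable_continuous_interval[OF cont_slice_t[OF cA sub]]
        integrable_continuous_interval[OF cont_slice_t[OF cB sub]] by auto
    ultimately show ?thesis by (simp add: integral_diff)
  qed
  have c: "continuous_on {a..b} (\<lambda>s. A s x - B s x)"
    using cont_slice_t[OF cA order_refl] cont_slice_t[OF cB order_refl] by (intro continuous_intros)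
  have H1: "((\<lambda>u. integral {a..u} (\<lambda>s. A s x - B s x)) has_vector_derivative (A t x - B t x)) (at t within {a..b})"
    using integral_has_vector_derivative[OF c t] by simp
  have H0: "((\<lambda>u. integral {a..u} (\<lambda>s. A s x - B s x)) has_vector_derivative 0) (at t within {a..b})"
    by (rule has_vector_derivative_transform_within[where f="\<lambda>_. 0" and d=1])
      (use t zero in \<open>auto intro!: derivative_intros\<close>)
  have "A t x - B t x = 0"
    using vector_derivative_unique_within_closed_interval[of a b t _ "A t x - B t x" 0] H1 H0 ab t by auto
  then show "A t x = B t x" by simp
qed

lemma quad_bound:
  fixes m c b bb :: real
  assumes "\<bar>c\<bar> \<le> m"
  shows "c * (b * bb) \<le> m / 2 * (b^2 + bb^2)"
proof (cases "c \<ge> 0")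
  case True
  have "m / 2 * (b^2 + bb^2) - c * (b * bb) = (m - c) / 2 * (b^2 + bb^2) + c / 2 * (b - bb)^2"
    by (simp add: power2_eq_square field_simps)
  moreover have "(m - c) / 2 * (b^2 + bb^2) \<ge> 0" using assms True by auto
  moreover have "c / 2 * (b - bb)^2 \<ge> 0" using True by auto
  ultimately show ?thesis by linarith
next
  case False
  have "m / 2 * (b^2 + bb^2) - c * (b * bb) = (m + c) / 2 * (b^2 + bb^2) - c / 2 * (b + bb)^2"
    by (simp add: power2_eq_square field_simps)
  moreover have "(m + c) / 2 * (b^2 + bb^2) \<ge> 0" using assms False by auto
  moreover have "- c / 2 * (b + bb)^2 \<ge> 0" using False by (intro mult_nonneg_nonneg) auto
  ultimately show ?thesis by linarith
qed

lemma alg: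
  fixes s P0 Pt Px Ptx Pxx Qt Qx Qtx Qxx e E2 Ptt Qtt :: real
  assumes s: "2 \<le> s" and P: "1 \<le> P0" "P0 \<le> s - 1" and E2: "0 \<le> E2"
    and eP: "Ptt - e^2 * Pxx - E2 * (Qt^2 - e^2 * Qx^2) = 0"
    and eQ: "Qtt - e^2 * Qxx + 2 * (Pt * Qt - e^2 * Px * Qx) = 0"
  shows "2 * s * ((Pt - P0/s + e*Px)^2 + E2*(Qt + e*Qx)^2)
       + s^2 * (2*(Pt - P0/s + e*Px)*((Ptt - e*Ptx) - ((Pt - e*Px)/s - P0/s^2) - e*Px + e*(Ptx - e*Pxx))
               + E2*2*(Pt - e*Px)*(Qt + e*Qx)^2
               + E2*2*(Qt + e*Qx)*((Qtt - e*Qtx) - e*Qx + e*(Qtx - e*Qxx)))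
     \<le> (1 - 2/s)/2 * (s^2*((Pt - P0/s - e*Px)^2 + E2*(Qt - e*Qx)^2) - s^2*((Pt - P0/s + e*Px)^2 + E2*(Qt + e*Qx)^2))"
proof -
  define a where "a = Pt - P0/s + e*Px"
  define ab where "ab = Pt - P0/s - e*Px"
  define b where "b = Qt + e*Qx"
  define bb where "bb = Qt - e*Qx"
  have Ptt: "Ptt = e^2 * Pxx + E2 * (Qt^2 - e^2 * Qx^2)" using eP by linarith
  have Qtt: "Qtt = e^2 * Qxx - 2 * (Pt * Qt - e^2 * Px * Qx)" using eQ by linarith
  have sne: "s \<noteq> 0" using s by auto
  have id: "2 * s * ((Pt - P0/s + e*Px)^2 + E2*(Qt + e*Qx)^2)
       + s^2 * (2*(Pt - P0/s + e*Px)*((Ptt - e*Ptx) - ((Pt - e*Px)/s - P0/s^2) - e*Px + e*(Ptx - e*Pxx))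
               + E2*2*(Pt - e*Px)*(Qt + e*Qx)^2
               + E2*2*(Qt + e*Qx)*((Qtt - e*Qtx) - e*Qx + e*(Qtx - e*Qxx)))
     = s^2 * ((2/s - 1) * (a^2 + E2 * b^2) + (1 - 2/s) * (a * ab) + (1 - 2*P0/s) * E2 * (b * bb))"
    unfolding a_def ab_def b_def bb_def Ptt Qtt
    using sne by (simp add: field_simps power2_eq_square)
  have c: "\<bar>1 - 2*P0/s\<bar> \<le> 1 - 2/s"
  proof -
    have "\<bar>s - 2*P0\<bar> \<le> s - 2" using P by auto
    then have "\<bar>s - 2*P0\<bar> / s \<le> (s - 2) / s" using s by (intro divide_right_mono) auto
    moreover have "1 - 2*P0/s = (s - 2*P0) / s" "1 - 2/s = (s - 2) / s" using sne by (auto simp: field_simps)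
    ultimately show ?thesis using s by (simp add: abs_divide)
  qed
  have q1: "(1 - 2*P0/s) * (b * bb) \<le> (1 - 2/s) / 2 * (b^2 + bb^2)"
    by (rule quad_bound[OF c])
  have q2: "(1 - 2/s) * (a * ab) \<le> (1 - 2/s) / 2 * (a^2 + ab^2)"
    by (rule quad_bound) (use s in \<open>auto simp: field_simps\<close>)
  have "(2/s - 1) * (a^2 + E2 * b^2) + (1 - 2/s) * (a * ab) + (1 - 2*P0/s) * E2 * (b * bb)
      \<le> (1 - 2/s)/2 * ((ab^2 + E2 * bb^2) - (a^2 + E2 * b^2))"
  proof -
    have "E2 * ((1 - 2*P0/s) * (b * bb)) \<le> E2 * ((1 - 2/s) / 2 * (b^2 + bb^2))"
      using q1 E2 by (rule mult_left_mono)
    moreover have "(2/s - 1) * (a^2 + E2 * b^2) + (1 - 2/s) * (a * ab) + (1 - 2*P0/s) * E2 * (b * bb)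
       = (2/s - 1) * (a^2 + E2 * b^2) + ((1 - 2/s) * (a * ab) + E2 * ((1 - 2*P0/s) * (b * bb)))"
      by (simp add: algebra_simps)
    moreover have "(1 - 2/s)/2 * ((ab^2 + E2 * bb^2) - (a^2 + E2 * b^2))
       = (2/s - 1) * (a^2 + E2 * b^2) + ((1 - 2/s) / 2 * (a^2 + ab^2) + E2 * ((1 - 2/s) / 2 * (b^2 + bb^2)))"
      by (simp add: field_simps)
    ultimately show ?thesis using q2 by linarith
  qed
  then have "s^2 * ((2/s - 1) * (a^2 + E2 * b^2) + (1 - 2/s) * (a * ab) + (1 - 2*P0/s) * E2 * (b * bb))
      \<le> s^2 * ((1 - 2/s)/2 * ((ab^2 + E2 * bb^2) - (a^2 + E2 * b^2)))"
    by (rule mult_left_mono) simp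
  then show ?thesis unfolding id unfolding a_def ab_def b_def bb_def by (simp add: algebra_simps)
qed

lemma per_int:
  fixes g :: "real \<Rightarrow> real"
  assumes "\<forall>x. g (x + 2 * pi) = g x"
  shows "g (x + of_int n * (2 * pi)) = g x"
proof -
  have "\<forall>x. g (x + of_int n * (2 * pi)) = g x"
  proof (induction n rule: int_induct[where k=0])
    case base then show ?case by simp
  next
    case (step1 i)
    show ?case
    proof
      fix x
      have "g (x + of_int (i + 1) * (2 * pi)) = g ((x + of_int i * (2 * pi)) + 2 * pi)"
        by (simp add: algebra_simps)
      also have "\<dots> = g x" using assms step1 by simp
      finally show "g (x + of_int (i + 1) * (2 * pi)) = g x" .
    qed
  next
    case (step2 i)
    show ?case
    proof
      fix x
      have "g (x + of_int (i - 1) * (2 * pi)) = g ((x + of_int (i - 1) * (2 * pi)) + 2 * pi)"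
        using assms by simp
      also have "\<dots> = g (x + of_int i * (2 * pi))"
        by (simp add: algebra_simps)
      also have "\<dots> = g x" using step2 by simp
      finally show "g (x + of_int (i - 1) * (2 * pi)) = g x" .
    qed
  qed
  then show ?thesis by simp
qed

lemma per_reduce:
  fixes g :: "real \<Rightarrow> real"
  assumes "\<forall>x. g (x + 2 * pi) = g x"
  shows "\<exists>y\<in>{0..2*pi}. g x = g y"
proof -
  define n where "n = \<lfloor>x / (2 * pi)\<rfloor>"
  define y where "y = x - of_int n * (2 * pi)"
  have p: "0 < 2 * pi" by simp
  have "of_int n \<le> x / (2 * pi)" "x / (2 * pi) < of_int n + 1" unfolding n_def by linarith+
  then have "of_int n * (2 * pi) \<le> x" "x < (of_int n + 1) * (2 * pi)"
    using p by (simp_all add: field_simps)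
  then have "y \<in> {0..2*pi}" unfolding y_def by (auto simp: algebra_simps)
  moreover have "g y = g x" using per_int[OF assms, of y n] unfolding y_def by simp
  ultimately show ?thesis by metis
qed

lemma touch_contra:
  fixes \<phi> :: "real \<Rightarrow> real"
  assumes ab: "a < s" "s \<le> b"
    and d: "(\<phi> has_real_derivative D) (at s within {a..b})" and D: "D < 0"
    and z: "\<phi> s = 0" and below: "\<forall>r\<in>{a..<s}. \<phi> r < 0"
  shows False
proof -
  obtain \<delta> where \<delta>: "\<delta> > 0" and H: "\<forall>h>0. s - h \<in> {a..b} \<longrightarrow> h < \<delta> \<longrightarrow> \<phi> s < \<phi> (s - h)"
    using has_real_derivative_neg_dec_left[OF d D] by blast
  define r where "r = min (\<delta>/2) (s - a)"
  have r: "r > 0" "r < \<delta>" "s - r \<in> {a..b}" "s - r \<in> {a..<s}"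
    using \<delta> ab unfolding r_def by auto
  then have "\<phi> s < \<phi> (s - r)" using H by auto
  moreover have "\<phi> (s - r) < 0" using below r by auto
  ultimately show False using z by simp
qed

lemma maxprin:
  fixes u v :: "real \<Rightarrow> real \<Rightarrow> real" and k \<alpha> \<beta> :: "real \<Rightarrow> real"
  assumes ab: "a < b"
    and cu: "continuous_on ({a..b} \<times> UNIV) (\<lambda>(t, x). u t x)"
    and cv: "continuous_on ({a..b} \<times> UNIV) (\<lambda>(t, x). v t x)"
    and pu: "\<forall>t\<in>{a..b}. \<forall>x. u t (x + 2 * pi) = u t x"
    and pv: "\<forall>t\<in>{a..b}. \<forall>x. v t (x + 2 * pi) = v t x"
    and k: "\<forall>t\<in>{a..b}. 0 \<le> k t"
    and du: "\<forall>t\<in>{a..b}. \<forall>c. \<exists>d. ((\<lambda>s. u s (c + exp (-s))) has_real_derivative d) (at t within {a..b})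
                 \<and> d \<le> k t * (v t (c + exp (-t)) - u t (c + exp (-t)))"
    and dv: "\<forall>t\<in>{a..b}. \<forall>c. \<exists>d. ((\<lambda>s. v s (c - exp (-s))) has_real_derivative d) (at t within {a..b})
                 \<and> d \<le> k t * (u t (c - exp (-t)) - v t (c - exp (-t)))"
    and dal: "\<forall>t\<in>{a..b}. (\<alpha> has_real_derivative k t * (\<beta> t - \<alpha> t)) (at t within {a..b})"
    and dbe: "\<forall>t\<in>{a..b}. (\<beta> has_real_derivative k t * (\<alpha> t - \<beta> t)) (at t within {a..b})"
    and ca: "continuous_on {a..b} \<alpha>" and cb: "continuous_on {a..b} \<beta>"
    and iu: "\<forall>x. u a x \<le> \<alpha> a" and iv: "\<forall>x. v a x \<le> \<beta> a"
  shows "\<forall>t\<in>{a..b}. \<forall>x. u t x \<le> \<alpha> t \<and> v t x \<le> \<beta> t"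
proof -
  have main: "\<forall>t\<in>{a..b}. \<forall>x. u t x < \<alpha> t + \<epsilon> * (t - a + 1) \<and> v t x < \<beta> t + \<epsilon> * (t - a + 1)"
    if \<epsilon>: "\<epsilon> > 0" for \<epsilon>
  proof (rule ccontr)
    define h where "h t = \<epsilon> * (t - a + 1)" for t
    define S where "S = {a..b} \<times> {0..2*pi}"
    define K1 where "K1 = {p \<in> S. \<alpha> (fst p) + h (fst p) \<le> u (fst p) (snd p)}"
    define K2 where "K2 = {p \<in> S. \<beta> (fst p) + h (fst p) \<le> v (fst p) (snd p)}"
    have cS: "compact S" unfolding S_def by (intro compact_Times compact_Icc)
    have clS: "closed S" using cS by (rule compact_imp_closed)
    have sub: "S \<subseteq> {a..b} \<times> UNIV" unfolding S_def by auto
    have fstS: "fst ` S \<subseteq> {a..b}" unfolding S_def by auto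
    have ch: "continuous_on S (\<lambda>p. h (fst p))" unfolding h_def by (auto intro!: continuous_intros continuous_on_id)
    have cua: "continuous_on S (\<lambda>p. u (fst p) (snd p))"
      using continuous_on_subset[OF cu sub] by (simp add: case_prod_unfold)
    have cvb: "continuous_on S (\<lambda>p. v (fst p) (snd p))"
      using continuous_on_subset[OF cv sub] by (simp add: case_prod_unfold)
    have caf: "continuous_on S (\<lambda>p. \<alpha> (fst p))"
      by (rule continuous_on_compose2[OF ca continuous_on_fst[OF continuous_on_id] fstS])
    have cbf: "continuous_on S (\<lambda>p. \<beta> (fst p))"
      by (rule continuous_on_compose2[OF cb continuous_on_fst[OF continuous_on_id] fstS])
    have "closed K1" unfolding K1_def
      by (rule continuous_on_closed_Collect_le[OF continuous_on_add[OF caf ch] cua clS])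
    moreover have "closed K2" unfolding K2_def
      by (rule continuous_on_closed_Collect_le[OF continuous_on_add[OF cbf ch] cvb clS])
    ultimately have "closed (K1 \<union> K2)" by auto
    moreover have "K1 \<union> K2 \<subseteq> S" unfolding K1_def K2_def by auto
    ultimately have cK: "compact (K1 \<union> K2)"
      using compact_Int_closed[OF cS, of "K1 \<union> K2"] by (simp add: Int_absorb1)
    define T where "T = fst ` (K1 \<union> K2)"
    have cT: "compact T" unfolding T_def
      by (rule compact_continuous_image[OF continuous_on_fst[OF continuous_on_id] cK])
    assume "\<not> (\<forall>t\<in>{a..b}. \<forall>x. u t x < \<alpha> t + \<epsilon> * (t - a + 1) \<and> v t x < \<beta> t + \<epsilon> * (t - a + 1))"
    then obtain t0 x0 where t0: "t0 \<in> {a..b}" and bad: "\<alpha> t0 + h t0 \<le> u t0 x0 \<or> \<beta> t0 + h t0 \<le> v t0 x0"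
      unfolding h_def by (auto simp: not_less) blast+
    have "T \<noteq> {}"
    proof (cases "\<alpha> t0 + h t0 \<le> u t0 x0")
      case True
      obtain y where y: "y \<in> {0..2*pi}" "u t0 x0 = u t0 y"
        using per_reduce[of "u t0" x0] pu t0 by auto
      then have "(t0, y) \<in> K1" using True t0 unfolding K1_def S_def by auto
      then show ?thesis unfolding T_def by auto
    next
      case False
      with bad have B: "\<beta> t0 + h t0 \<le> v t0 x0" by auto
      obtain y where y: "y \<in> {0..2*pi}" "v t0 x0 = v t0 y"
        using per_reduce[of "v t0" x0] pv t0 by auto
      then have "(t0, y) \<in> K2" using B t0 unfolding K2_def S_def by auto
      then show ?thesis unfolding T_def by auto
    qed
    then obtain s where sT: "s \<in> T" and smin: "\<forall>y\<in>T. s \<le> y"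
      using compact_attains_inf[OF cT] by blast
    then obtain xs where sK: "(s, xs) \<in> K1 \<union> K2" unfolding T_def by force
    then have s: "s \<in> {a..b}" and xs: "xs \<in> {0..2*pi}" unfolding K1_def K2_def S_def by auto
    have ha: "h a = \<epsilon>" unfolding h_def by simp
    have "s \<noteq> a"
    proof
      assume "s = a"
      with sK show False unfolding K1_def K2_def using iu iv ha \<epsilon>
        by (auto dest: spec[of _ xs] simp: add.commute)
    qed
    with s have as: "a < s" by auto
    have below: "u t x < \<alpha> t + h t \<and> v t x < \<beta> t + h t" if t: "t \<in> {a..<s}" for t x
    proof -
      have tab: "t \<in> {a..b}" using t s by auto
      have tT: "t \<notin> T" using smin t by force
      obtain y1 where y1: "y1 \<in> {0..2*pi}" "u t x = u t y1"
        using per_reduce[of "u t" x] pu tab by auto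
      obtain y2 where y2: "y2 \<in> {0..2*pi}" "v t x = v t y2"
        using per_reduce[of "v t" x] pv tab by auto
      have "\<not> (\<alpha> t + h t \<le> u t y1)"
      proof
        assume "\<alpha> t + h t \<le> u t y1"
        then have "(t, y1) \<in> K1" using tab y1 unfolding K1_def S_def by auto
        then show False using tT unfolding T_def by force
      qed
      moreover have "\<not> (\<beta> t + h t \<le> v t y2)"
      proof
        assume "\<beta> t + h t \<le> v t y2"
        then have "(t, y2) \<in> K2" using tab y2 unfolding K2_def S_def by auto
        then show False using tT unfolding T_def by force
      qed
      ultimately show ?thesis using y1 y2 by auto
    qed
    have sub_as: "{a..s} \<subseteq> {a..b}" using s by auto
    have atu: "u s x \<le> \<alpha> s + h s" for x
    proof -
      have c: "continuous_on (closure {a..<s}) (\<lambda>t. u t x - (\<alpha> t + h t))"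
        using as cont_slice_t[OF cu sub_as, of x] continuous_on_subset[OF ca sub_as]
        unfolding h_def by (auto intro!: continuous_intros continuous_on_id)
      have "u s x - (\<alpha> s + h s) \<le> 0"
        by (rule continuous_le_on_closure[OF c]) (use as below in \<open>auto simp: less_imp_le\<close>)
      then show ?thesis by simp
    qed
    have atv: "v s x \<le> \<beta> s + h s" for x
    proof -
      have c: "continuous_on (closure {a..<s}) (\<lambda>t. v t x - (\<beta> t + h t))"
        using as cont_slice_t[OF cv sub_as, of x] continuous_on_subset[OF cb sub_as]
        unfolding h_def by (auto intro!: continuous_intros continuous_on_id)
      have "v s x - (\<beta> s + h s) \<le> 0"
        by (rule continuous_le_on_closure[OF c]) (use as below in \<open>auto simp: less_imp_le\<close>)
      then show ?thesis by simp
    qed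
    have dh: "(h has_real_derivative \<epsilon>) (at s within {a..b})"
      unfolding h_def by (auto intro!: derivative_eq_intros)
    show False
    proof (cases "(s, xs) \<in> K1")
      case True
      then have eq: "u s xs = \<alpha> s + h s" using atu[of xs] unfolding K1_def by auto
      define c where "c = xs - exp (-s)"
      have cx: "c + exp (-s) = xs" unfolding c_def by simp
      obtain d where d: "((\<lambda>r. u r (c + exp (-r))) has_real_derivative d) (at s within {a..b})"
        and dle: "d \<le> k s * (v s xs - u s xs)"
        using du s cx by metis
      have D: "((\<lambda>r. u r (c + exp (-r)) - (\<alpha> r + h r)) has_real_derivative d - (k s * (\<beta> s - \<alpha> s) + \<epsilon>)) (at s within {a..b})"
        using d dal s dh by (auto intro!: derivative_eq_intros)
      have "k s * (v s xs - u s xs) \<le> k s * (\<beta> s - \<alpha> s)"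
        using k s atv[of xs] eq by (intro mult_left_mono) auto
      then have neg: "d - (k s * (\<beta> s - \<alpha> s) + \<epsilon>) < 0" using dle \<epsilon> by linarith
      show False
      proof (rule touch_contra[OF as _ D neg])
        show "s \<le> b" using s by auto
        show "u s (c + exp (-s)) - (\<alpha> s + h s) = 0" using cx eq by simp
        show "\<forall>r\<in>{a..<s}. u r (c + exp (-r)) - (\<alpha> r + h r) < 0" using below by auto
      qed
    next
      case False
      with sK have K2: "(s, xs) \<in> K2" by auto
      then have eq: "v s xs = \<beta> s + h s" using atv[of xs] unfolding K2_def by auto
      define c where "c = xs + exp (-s)"
      have cx: "c - exp (-s) = xs" unfolding c_def by simp
      obtain d where d: "((\<lambda>r. v r (c - exp (-r))) has_real_derivative d) (at s within {a..b})"
        and dle: "d \<le> k s * (u s xs - v s xs)"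
        using dv s cx by metis
      have D: "((\<lambda>r. v r (c - exp (-r)) - (\<beta> r + h r)) has_real_derivative d - (k s * (\<alpha> s - \<beta> s) + \<epsilon>)) (at s within {a..b})"
        using d dbe s dh by (auto intro!: derivative_eq_intros)
      have "k s * (u s xs - v s xs) \<le> k s * (\<alpha> s - \<beta> s)"
        using k s atu[of xs] eq by (intro mult_left_mono) auto
      then have neg: "d - (k s * (\<alpha> s - \<beta> s) + \<epsilon>) < 0" using dle \<epsilon> by linarith
      show False
      proof (rule touch_contra[OF as _ D neg])
        show "s \<le> b" using s by auto
        show "v s (c - exp (-s)) - (\<beta> s + h s) = 0" using cx eq by simp
        show "\<forall>r\<in>{a..<s}. v r (c - exp (-r)) - (\<beta> r + h r) < 0" using below by auto
      qed
    qed
  qed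
  show ?thesis
  proof (intro ballI allI conjI)
    fix t x assume t: "t \<in> {a..b}"
    then have tp: "t - a + 1 > 0" by auto
    show "u t x \<le> \<alpha> t"
    proof (rule field_le_epsilon)
      fix e :: real assume e: "0 < e"
      have "e / (t - a + 1) > 0" using e tp by simp
      from main[OF this] t have "u t x < \<alpha> t + e / (t - a + 1) * (t - a + 1)" by blast
      then show "u t x \<le> \<alpha> t + e" using tp by simp
    qed
    show "v t x \<le> \<beta> t"
    proof (rule field_le_epsilon)
      fix e :: real assume e: "0 < e"
      have "e / (t - a + 1) > 0" using e tp by simp
      from main[OF this] t have "v t x < \<beta> t + e / (t - a + 1) * (t - a + 1)" by blast
      then show "v t x \<le> \<beta> t + e" using tp by simp
    qed
  qed
qed

lemma cont_cong_strip:
  fixes f g :: "real \<Rightarrow> real \<Rightarrow> real"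
  assumes "continuous_on ({a..b} \<times> UNIV) (\<lambda>(t, x). g t x)"
    and "\<forall>t\<in>{a..b}. \<forall>x. f t x = g t x"
  shows "continuous_on ({a..b} \<times> UNIV) (\<lambda>(t, x). f t x)"
  using assms(1) by (rule continuous_on_eq) (use assms(2) in auto)

lemma smooth_facts:
  fixes P Pt Px Pxx :: "real \<Rightarrow> real \<Rightarrow> real"
  assumes ab: "a < b"
    and sm: "smooth_strip a b P"
    and dPt: "\<forall>t\<in>{a..b}. \<forall>x. ((\<lambda>s. P s x) has_real_derivative Pt t x) (at t within {a..b})"
    and dPx: "\<forall>t\<in>{a..b}. \<forall>x. ((\<lambda>y. P t y) has_real_derivative Px t x) (at x)"
    and dPxx: "\<forall>t\<in>{a..b}. \<forall>x. ((\<lambda>y. Px t y) has_real_derivative Pxx t x) (at x)"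
  shows "\<exists>M. continuous_on ({a..b} \<times> UNIV) (\<lambda>(t, x). P t x)
     \<and> continuous_on ({a..b} \<times> UNIV) (\<lambda>(t, x). Pt t x)
     \<and> continuous_on ({a..b} \<times> UNIV) (\<lambda>(t, x). Px t x)
     \<and> continuous_on ({a..b} \<times> UNIV) (\<lambda>(t, x). Pxx t x)
     \<and> continuous_on ({a..b} \<times> UNIV) (\<lambda>(t, x). M t x)
     \<and> (\<forall>t\<in>{a..b}. \<forall>x. ((\<lambda>y. Pt t y) has_real_derivative M t x) (at x))
     \<and> (\<forall>t\<in>{a..b}. \<forall>x. ((\<lambda>s. Px s x) has_real_derivative M t x) (at t within {a..b}))"
proof -
  let ?I = "{a..b}"
  let ?S = "{a..b} \<times> (UNIV :: real set)"
  obtain D where PD: "P \<in> D" and H: "\<forall>g\<in>D. continuous_on ?S (\<lambda>(t, x). g t x)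
          \<and> (\<exists>gt\<in>D. \<forall>t\<in>?I. \<forall>x. ((\<lambda>s. g s x) has_real_derivative gt t x) (at t within ?I))
          \<and> (\<exists>gx\<in>D. \<forall>t\<in>?I. \<forall>x. ((\<lambda>y. g t y) has_real_derivative gx t x) (at x))"
    using sm unfolding smooth_strip_def by blast
  from H PD obtain gt gx where cP: "continuous_on ?S (\<lambda>(t, x). P t x)"
    and gtD: "gt \<in> D" and gxD: "gx \<in> D"
    and dgt: "\<forall>t\<in>?I. \<forall>x. ((\<lambda>s. P s x) has_real_derivative gt t x) (at t within ?I)"
    and dgx: "\<forall>t\<in>?I. \<forall>x. ((\<lambda>y. P t y) has_real_derivative gx t x) (at x)"
    by blast
  have eqt: "\<forall>t\<in>?I. \<forall>x. Pt t x = gt t x"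
    using deriv_uniq_Icc[OF ab] dPt dgt by blast
  have eqx: "\<forall>t\<in>?I. \<forall>x. Px t x = gx t x"
    using DERIV_unique dPx dgx by blast
  from H gtD obtain gtx where cgt: "continuous_on ?S (\<lambda>(t, x). gt t x)" and gtxD: "gtx \<in> D"
    and dgtx: "\<forall>t\<in>?I. \<forall>x. ((\<lambda>y. gt t y) has_real_derivative gtx t x) (at x)"
    by blast
  from H gxD obtain gxt gxx where cgx: "continuous_on ?S (\<lambda>(t, x). gx t x)"
    and gxtD: "gxt \<in> D" and gxxD: "gxx \<in> D"
    and dgxt: "\<forall>t\<in>?I. \<forall>x. ((\<lambda>s. gx s x) has_real_derivative gxt t x) (at t within ?I)"
    and dgxx: "\<forall>t\<in>?I. \<forall>x. ((\<lambda>y. gx t y) has_real_derivative gxx t x) (at x)"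
    by blast
  have cgtx: "continuous_on ?S (\<lambda>(t, x). gtx t x)" using H gtxD by blast
  have cgxt: "continuous_on ?S (\<lambda>(t, x). gxt t x)" using H gxtD by blast
  have cgxx: "continuous_on ?S (\<lambda>(t, x). gxx t x)" using H gxxD by blast
  have cPt: "continuous_on ?S (\<lambda>(t, x). Pt t x)" by (rule cont_cong_strip[OF cgt eqt])
  have cPx: "continuous_on ?S (\<lambda>(t, x). Px t x)" by (rule cont_cong_strip[OF cgx eqx])
  have dA: "\<forall>t\<in>?I. \<forall>x. ((\<lambda>y. Pt t y) has_real_derivative gtx t x) (at x)"
  proof (intro ballI allI)
    fix t x assume t: "t \<in> ?I"
    have "(\<lambda>y. Pt t y) = (\<lambda>y. gt t y)" using eqt t by auto
    then show "((\<lambda>y. Pt t y) has_real_derivative gtx t x) (at x)" using dgtx t by simp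
  qed
  have fxe: "(\<lambda>y. Px t y) = (\<lambda>y. gx t y)" if "t \<in> ?I" for t using eqx that by auto
  have eqxx: "\<forall>t\<in>?I. \<forall>x. Pxx t x = gxx t x"
  proof (intro ballI allI)
    fix t x assume t: "t \<in> ?I"
    have "((\<lambda>y. gx t y) has_real_derivative Pxx t x) (at x)"
      using dPxx t fxe[OF t] by (metis atLeastAtMost_iff)
    moreover have "((\<lambda>y. gx t y) has_real_derivative gxx t x) (at x)"
      using dgxx t by simp
    ultimately show "Pxx t x = gxx t x" by (rule DERIV_unique)
  qed
  have cPxx: "continuous_on ?S (\<lambda>(t, x). Pxx t x)" by (rule cont_cong_strip[OF cgxx eqxx])
  have dB: "\<forall>t\<in>?I. \<forall>x. ((\<lambda>s. Px s x) has_real_derivative gxt t x) (at t within ?I)"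
  proof (intro ballI allI)
    fix t x assume t: "t \<in> ?I"
    show "((\<lambda>s. Px s x) has_real_derivative gxt t x) (at t within ?I)"
      by (rule has_field_derivative_transform_within[where f="\<lambda>s. gx s x" and d=1])
        (use dgxt t eqx in auto)
  qed
  have sw: "\<forall>t\<in>?I. \<forall>x. gtx t x = gxt t x"
    by (rule schwarz[OF ab dPt dPx dA dB cPt cgtx cgxt])
  have dB': "\<forall>t\<in>?I. \<forall>x. ((\<lambda>s. Px s x) has_real_derivative gtx t x) (at t within ?I)"
    using dB sw by auto
  show ?thesis using cP cPt cPx cPxx cgtx dA dB' by blast
qed

lemma per_derivs:
  fixes P Pt Px :: "real \<Rightarrow> real \<Rightarrow> real"
  assumes ab: "a < b"
    and per: "\<forall>t\<in>{a..b}. \<forall>x. P t (x + 2 * pi) = P t x"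
    and dPt: "\<forall>t\<in>{a..b}. \<forall>x. ((\<lambda>s. P s x) has_real_derivative Pt t x) (at t within {a..b})"
    and dPx: "\<forall>t\<in>{a..b}. \<forall>x. ((\<lambda>y. P t y) has_real_derivative Px t x) (at x)"
  shows "\<forall>t\<in>{a..b}. \<forall>x. Pt t (x + 2 * pi) = Pt t x \<and> Px t (x + 2 * pi) = Px t x"
proof (intro ballI allI conjI)
  fix t x assume t: "t \<in> {a..b}"
  have "((\<lambda>s. P s x) has_real_derivative Pt t (x + 2 * pi)) (at t within {a..b})"
    by (rule has_field_derivative_transform_within[where f="\<lambda>s. P s (x + 2 * pi)" and d=1])
      (use dPt t per in auto)
  then show "Pt t (x + 2 * pi) = Pt t x"
    using deriv_uniq_Icc[OF ab t] dPt t by blast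
  have "((\<lambda>y. P t (y + 2 * pi)) has_real_derivative Px t (x + 2 * pi)) (at x)"
    using dPx t DERIV_shift[of "P t" "Px t (x + 2 * pi)" x "2 * pi"] by auto
  moreover have "(\<lambda>y. P t (y + 2 * pi)) = (\<lambda>y. P t y)" using per t by auto
  ultimately have "((\<lambda>y. P t y) has_real_derivative Px t (x + 2 * pi)) (at x)" by simp
  then show "Px t (x + 2 * pi) = Px t x"
    using DERIV_unique dPx t by blast
qed

lemma energy_deriv:
  fixes p pt px qt qx :: "real \<Rightarrow> real"
  assumes s: "s \<noteq> 0"
    and dp: "(p has_real_derivative p') (at s within I)"
    and dpt: "(pt has_real_derivative pt') (at s within I)"
    and dpx: "(px has_real_derivative px') (at s within I)"
    and dqt: "(qt has_real_derivative qt') (at s within I)"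
    and dqx: "(qx has_real_derivative qx') (at s within I)"
  shows "((\<lambda>r. r^2 * ((pt r - p r / r + \<sigma> * exp (-r) * px r)^2 + exp (2 * p r) * (qt r + \<sigma> * exp (-r) * qx r)^2))
     has_real_derivative
      (2 * s * ((pt s - p s / s + \<sigma> * exp (-s) * px s)^2 + exp (2 * p s) * (qt s + \<sigma> * exp (-s) * qx s)^2)
      + s^2 * (2 * (pt s - p s / s + \<sigma> * exp (-s) * px s) * (pt' - (p' / s - p s / s^2) - \<sigma> * exp (-s) * px s + \<sigma> * exp (-s) * px')
             + exp (2 * p s) * 2 * p' * (qt s + \<sigma> * exp (-s) * qx s)^2
             + exp (2 * p s) * 2 * (qt s + \<sigma> * exp (-s) * qx s) * (qt' - \<sigma> * exp (-s) * qx s + \<sigma> * exp (-s) * qx'))))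
     (at s within I)"
  apply (rule dp dpt dpx dqt dqx derivative_eq_intros refl s)+
  using s apply (simp add: field_simps power2_eq_square)
  done

definition Wg :: "real \<Rightarrow> (real \<Rightarrow> real \<Rightarrow> real) \<Rightarrow> (real \<Rightarrow> real \<Rightarrow> real) \<Rightarrow> (real \<Rightarrow> real \<Rightarrow> real)
   \<Rightarrow> (real \<Rightarrow> real \<Rightarrow> real) \<Rightarrow> (real \<Rightarrow> real \<Rightarrow> real) \<Rightarrow> real \<Rightarrow> real \<Rightarrow> real" where
  "Wg \<sigma> P Pt Px Qt Qx t x = (Pt t x - P t x / t + \<sigma> * exp (-t) * Px t x)^2
      + exp (2 * P t x) * (Qt t x + \<sigma> * exp (-t) * Qx t x)^2"

lemma char_deriv:
  fixes P Pt Px Ptt Pxx Qt Qx Qtt Qxx MP MQ :: "real \<Rightarrow> real \<Rightarrow> real"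
  assumes a2: "2 \<le> a"
    and dPt: "\<forall>t\<in>{a..b}. \<forall>x. ((\<lambda>s. P s x) has_real_derivative Pt t x) (at t within {a..b})"
    and dPx: "\<forall>t\<in>{a..b}. \<forall>x. ((\<lambda>y. P t y) has_real_derivative Px t x) (at x)"
    and dPtt: "\<forall>t\<in>{a..b}. \<forall>x. ((\<lambda>s. Pt s x) has_real_derivative Ptt t x) (at t within {a..b})"
    and dPtx: "\<forall>t\<in>{a..b}. \<forall>x. ((\<lambda>y. Pt t y) has_real_derivative MP t x) (at x)"
    and dPxt: "\<forall>t\<in>{a..b}. \<forall>x. ((\<lambda>s. Px s x) has_real_derivative MP t x) (at t within {a..b})"
    and dPxx: "\<forall>t\<in>{a..b}. \<forall>x. ((\<lambda>y. Px t y) has_real_derivative Pxx t x) (at x)"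
    and dQtt: "\<forall>t\<in>{a..b}. \<forall>x. ((\<lambda>s. Qt s x) has_real_derivative Qtt t x) (at t within {a..b})"
    and dQtx: "\<forall>t\<in>{a..b}. \<forall>x. ((\<lambda>y. Qt t y) has_real_derivative MQ t x) (at x)"
    and dQxt: "\<forall>t\<in>{a..b}. \<forall>x. ((\<lambda>s. Qx s x) has_real_derivative MQ t x) (at t within {a..b})"
    and dQxx: "\<forall>t\<in>{a..b}. \<forall>x. ((\<lambda>y. Qx t y) has_real_derivative Qxx t x) (at x)"
    and cPx: "continuous_on ({a..b} \<times> UNIV) (\<lambda>(t, x). Px t x)"
    and cMP: "continuous_on ({a..b} \<times> UNIV) (\<lambda>(t, x). MP t x)"
    and cPxx: "continuous_on ({a..b} \<times> UNIV) (\<lambda>(t, x). Pxx t x)"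
    and cMQ: "continuous_on ({a..b} \<times> UNIV) (\<lambda>(t, x). MQ t x)"
    and cQxx: "continuous_on ({a..b} \<times> UNIV) (\<lambda>(t, x). Qxx t x)"
    and eqP: "\<forall>t\<in>{a..b}. \<forall>x.
       Ptt t x - exp (-2*t) * Pxx t x - exp (2 * P t x) * ((Qt t x)^2 - exp (-2*t) * (Qx t x)^2) = 0"
    and eqQ: "\<forall>t\<in>{a..b}. \<forall>x.
       Qtt t x - exp (-2*t) * Qxx t x + 2 * (Pt t x * Qt t x - exp (-2*t) * Px t x * Qx t x) = 0"
    and Pbd: "\<forall>t\<in>{a..b}. \<forall>x. 1 \<le> P t x \<and> P t x \<le> t - 1"
    and \<sigma>: "\<sigma>^2 = 1" and t: "t \<in> {a..b}"
  shows "\<exists>d. ((\<lambda>s. s^2 * Wg \<sigma> P Pt Px Qt Qx s (c + \<sigma> * exp (-s))) has_real_derivative d) (at t within {a..b})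
     \<and> d \<le> (1 - 2/t)/2 * (t^2 * Wg (-\<sigma>) P Pt Px Qt Qx t (c + \<sigma> * exp (-t))
                          - t^2 * Wg \<sigma> P Pt Px Qt Qx t (c + \<sigma> * exp (-t)))"
proof -
  define \<gamma> where "\<gamma> = (\<lambda>s. c + \<sigma> * exp (-s))"
  have dg: "(\<gamma> has_real_derivative (- \<sigma> * exp (-t))) (at t within {a..b})"
    unfolding \<gamma>_def by (rule derivative_eq_intros refl)+ simp
  have t0: "t \<noteq> 0" using t a2 by auto
  note hP = chain_curve[OF dPt dPx cPx dg t]
  note hPt = chain_curve[OF dPtt dPtx cMP dg t]
  note hPx = chain_curve[OF dPxt dPxx cPxx dg t]
  note hQt = chain_curve[OF dQtt dQtx cMQ dg t]
  note hQx = chain_curve[OF dQxt dQxx cQxx dg t]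
  note E = energy_deriv[OF t0 hP hPt hPx hQt hQx, of \<sigma>]
  have fe: "(\<lambda>s. s^2 * Wg \<sigma> P Pt Px Qt Qx s (c + \<sigma> * exp (-s))) =
    (\<lambda>r. r^2 * ((Pt r (\<gamma> r) - P r (\<gamma> r) / r + \<sigma> * exp (-r) * Px r (\<gamma> r))^2
       + exp (2 * P r (\<gamma> r)) * (Qt r (\<gamma> r) + \<sigma> * exp (-r) * Qx r (\<gamma> r))^2))"
    by (simp add: Wg_def \<gamma>_def)
  have e2: "(\<sigma> * exp (-t))^2 = exp (-2*t)"
  proof -
    have "(\<sigma> * exp (-t))^2 = \<sigma>^2 * exp (-t)^2" by (simp add: power_mult_distrib)
    also have "\<dots> = exp (-t) * exp (-t)" using \<sigma> by (simp add: power2_eq_square)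
    also have "\<dots> = exp (-2*t)" by (simp add: exp_add[symmetric])
    finally show ?thesis .
  qed
  have tt: "2 \<le> t" using t a2 by auto
  have A: "2 * t * ((Pt t (\<gamma> t) - P t (\<gamma> t)/t + (\<sigma> * exp (-t))*Px t (\<gamma> t))^2 + exp (2 * P t (\<gamma> t))*(Qt t (\<gamma> t) + (\<sigma> * exp (-t))*Qx t (\<gamma> t))^2)
       + t^2 * (2*(Pt t (\<gamma> t) - P t (\<gamma> t)/t + (\<sigma> * exp (-t))*Px t (\<gamma> t))*((Ptt t (\<gamma> t) - (\<sigma> * exp (-t))*MP t (\<gamma> t)) - ((Pt t (\<gamma> t) - (\<sigma> * exp (-t))*Px t (\<gamma> t))/t - P t (\<gamma> t)/t^2) - (\<sigma> * exp (-t))*Px t (\<gamma> t) + (\<sigma> * exp (-t))*(MP t (\<gamma> t) - (\<sigma> * exp (-t))*Pxx t (\<gamma> t)))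
               + exp (2 * P t (\<gamma> t))*2*(Pt t (\<gamma> t) - (\<sigma> * exp (-t))*Px t (\<gamma> t))*(Qt t (\<gamma> t) + (\<sigma> * exp (-t))*Qx t (\<gamma> t))^2
               + exp (2 * P t (\<gamma> t))*2*(Qt t (\<gamma> t) + (\<sigma> * exp (-t))*Qx t (\<gamma> t))*((Qtt t (\<gamma> t) - (\<sigma> * exp (-t))*MQ t (\<gamma> t)) - (\<sigma> * exp (-t))*Qx t (\<gamma> t) + (\<sigma> * exp (-t))*(MQ t (\<gamma> t) - (\<sigma> * exp (-t))*Qxx t (\<gamma> t))))
     \<le> (1 - 2/t)/2 * (t^2*((Pt t (\<gamma> t) - P t (\<gamma> t)/t - (\<sigma> * exp (-t))*Px t (\<gamma> t))^2 + exp (2 * P t (\<gamma> t))*(Qt t (\<gamma> t) - (\<sigma> * exp (-t))*Qx t (\<gamma> t))^2) - t^2*((Pt t (\<gamma> t) - P t (\<gamma> t)/t + (\<sigma> * exp (-t))*Px t (\<gamma> t))^2 + exp (2 * P t (\<gamma> t))*(Qt t (\<gamma> t) + (\<sigma> * exp (-t))*Qx t (\<gamma> t))^2))"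
    by (rule alg) (use tt Pbd t eqP eqQ e2 in auto)
  show ?thesis
    apply (rule exI, rule conjI)
     apply (subst fe)
     apply (rule E)
    using A by (simp add: Wg_def \<gamma>_def algebra_simps)
qed

lemma cont_slice_x:
  fixes G :: "real \<Rightarrow> real \<Rightarrow> real"
  assumes "continuous_on ({a..b} \<times> UNIV) (\<lambda>(t, x). G t x)" "t \<in> {a..b}"
  shows "continuous_on UNIV (\<lambda>x. G t x)"
proof -
  have "continuous_on UNIV ((\<lambda>(t, x). G t x) \<circ> (\<lambda>x. (t, x)))"
    by (rule continuous_on_compose) (use assms in \<open>auto intro!: continuous_intros continuous_on_subset[OF assms(1)]\<close>)
  then show ?thesis by (simp add: o_def)
qed

lemma bdd_per:
  fixes g :: "real \<Rightarrow> real"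
  assumes c: "continuous_on UNIV g" and p: "\<forall>x. g (x + 2 * pi) = g x"
  shows "bdd_above (range g)"
proof -
  have "range g \<subseteq> g ` {0..2*pi}"
    using per_reduce[OF p] by fastforce
  moreover have "compact (g ` {0..2*pi})"
    by (rule compact_continuous_image[OF continuous_on_subset[OF c] compact_Icc]) auto
  ultimately show ?thesis
    by (meson bdd_above_mono bounded_imp_bdd_above compact_imp_bounded)
qed

lemma cont_W:
  fixes P Pt Px Qt Qx :: "real \<Rightarrow> real \<Rightarrow> real"
  assumes a: "0 < a"
    and cP: "continuous_on ({a..b} \<times> UNIV) (\<lambda>(t, x). P t x)"
    and cPt: "continuous_on ({a..b} \<times> UNIV) (\<lambda>(t, x). Pt t x)"
    and cPx: "continuous_on ({a..b} \<times> UNIV) (\<lambda>(t, x). Px t x)"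
    and cQt: "continuous_on ({a..b} \<times> UNIV) (\<lambda>(t, x). Qt t x)"
    and cQx: "continuous_on ({a..b} \<times> UNIV) (\<lambda>(t, x). Qx t x)"
  shows "continuous_on ({a..b} \<times> UNIV) (\<lambda>(t, x). t^2 * Wg \<sigma> P Pt Px Qt Qx t x)"
proof -
  have nz: "\<forall>p\<in>{a..b} \<times> (UNIV::real set). fst p \<noteq> 0" using a by auto
  show ?thesis
    using cP cPt cPx cQt cQx nz unfolding Wg_def case_prod_unfold
    by (auto intro!: continuous_intros)
qed

lemma cont_W0:
  fixes P Pt Px Qt Qx :: "real \<Rightarrow> real \<Rightarrow> real"
  assumes a: "0 < a"
    and cP: "continuous_on ({a..b} \<times> UNIV) (\<lambda>(t, x). P t x)"
    and cPt: "continuous_on ({a..b} \<times> UNIV) (\<lambda>(t, x). Pt t x)"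
    and cPx: "continuous_on ({a..b} \<times> UNIV) (\<lambda>(t, x). Px t x)"
    and cQt: "continuous_on ({a..b} \<times> UNIV) (\<lambda>(t, x). Qt t x)"
    and cQx: "continuous_on ({a..b} \<times> UNIV) (\<lambda>(t, x). Qx t x)"
  shows "continuous_on ({a..b} \<times> UNIV) (\<lambda>(t, x). Wg \<sigma> P Pt Px Qt Qx t x)"
proof -
  have nz: "\<forall>p\<in>{a..b} \<times> (UNIV::real set). fst p \<noteq> 0" using a by auto
  show ?thesis
    using cP cPt cPx cQt cQx nz unfolding Wg_def case_prod_unfold
    by (auto intro!: continuous_intros)
qed

theorem lemma1:
  fixes P Q Pt Px Ptt Pxx Qt Qx Qtt Qxx :: "real \<Rightarrow> real \<Rightarrow> real"
    and \<tau>1 \<tau>2 :: real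
  assumes smoothP: "smooth_strip \<tau>1 \<tau>2 P"
    and smoothQ: "smooth_strip \<tau>1 \<tau>2 Q"
    and perP: "\<forall>t\<in>{\<tau>1..\<tau>2}. \<forall>x. P t (x + 2 * pi) = P t x"
    and perQ: "\<forall>t\<in>{\<tau>1..\<tau>2}. \<forall>x. Q t (x + 2 * pi) = Q t x"
    and dPt: "\<forall>t\<in>{\<tau>1..\<tau>2}. \<forall>x. ((\<lambda>s. P s x) has_real_derivative Pt t x) (at t within {\<tau>1..\<tau>2})"
    and dPx: "\<forall>t\<in>{\<tau>1..\<tau>2}. \<forall>x. ((\<lambda>y. P t y) has_real_derivative Px t x) (at x)"
    and dPtt: "\<forall>t\<in>{\<tau>1..\<tau>2}. \<forall>x. ((\<lambda>s. Pt s x) has_real_derivative Ptt t x) (at t within {\<tau>1..\<tau>2})"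
    and dPxx: "\<forall>t\<in>{\<tau>1..\<tau>2}. \<forall>x. ((\<lambda>y. Px t y) has_real_derivative Pxx t x) (at x)"
    and dQt: "\<forall>t\<in>{\<tau>1..\<tau>2}. \<forall>x. ((\<lambda>s. Q s x) has_real_derivative Qt t x) (at t within {\<tau>1..\<tau>2})"
    and dQx: "\<forall>t\<in>{\<tau>1..\<tau>2}. \<forall>x. ((\<lambda>y. Q t y) has_real_derivative Qx t x) (at x)"
    and dQtt: "\<forall>t\<in>{\<tau>1..\<tau>2}. \<forall>x. ((\<lambda>s. Qt s x) has_real_derivative Qtt t x) (at t within {\<tau>1..\<tau>2})"
    and dQxx: "\<forall>t\<in>{\<tau>1..\<tau>2}. \<forall>x. ((\<lambda>y. Qx t y) has_real_derivative Qxx t x) (at x)"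
    and eqP: "\<forall>t\<in>{\<tau>1..\<tau>2}. \<forall>x.
       Ptt t x - exp (-2*t) * Pxx t x - exp (2 * P t x) * ((Qt t x)^2 - exp (-2*t) * (Qx t x)^2) = 0"
    and eqQ: "\<forall>t\<in>{\<tau>1..\<tau>2}. \<forall>x.
       Qtt t x - exp (-2*t) * Qxx t x + 2 * (Pt t x * Qt t x - exp (-2*t) * Px t x * Qx t x) = 0"
    and t12: "\<tau>1 \<le> \<tau>2" and t1: "2 \<le> \<tau>1"
    and Pbd: "\<forall>t\<in>{\<tau>1..\<tau>2}. \<forall>x. 1 \<le> P t x \<and> P t x \<le> t - 1"
  shows "\<forall>t\<in>{\<tau>1..\<tau>2}. F_energy P Pt Px Qt Qx t \<le> F_energy P Pt Px Qt Qx \<tau>1 * (\<tau>1 / t)^2"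
proof (intro ballI)
  fix t assume t: "t \<in> {\<tau>1..\<tau>2}"
  let ?F = "F_energy P Pt Px Qt Qx"
  show "?F t \<le> ?F \<tau>1 * (\<tau>1 / t)^2"
  proof (cases "\<tau>1 = \<tau>2")
    case True
    then have "t = \<tau>1" using t by auto
    then show ?thesis using t1 by simp
  next
    case False
    then have lt: "\<tau>1 < \<tau>2" using t12 by auto
    define a where "a = \<tau>1"
    have a2: "2 \<le> a" using t1 unfolding a_def by simp
    have a0: "0 < a" using a2 by simp
    obtain MP where cP: "continuous_on ({\<tau>1..\<tau>2} \<times> UNIV) (\<lambda>(t, x). P t x)"
      and cPt: "continuous_on ({\<tau>1..\<tau>2} \<times> UNIV) (\<lambda>(t, x). Pt t x)"
      and cPx: "continuous_on ({\<tau>1..\<tau>2} \<times> UNIV) (\<lambda>(t, x). Px t x)"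
      and cPxx: "continuous_on ({\<tau>1..\<tau>2} \<times> UNIV) (\<lambda>(t, x). Pxx t x)"
      and cMP: "continuous_on ({\<tau>1..\<tau>2} \<times> UNIV) (\<lambda>(t, x). MP t x)"
      and dPtx: "\<forall>t\<in>{\<tau>1..\<tau>2}. \<forall>x. ((\<lambda>y. Pt t y) has_real_derivative MP t x) (at x)"
      and dPxt: "\<forall>t\<in>{\<tau>1..\<tau>2}. \<forall>x. ((\<lambda>s. Px s x) has_real_derivative MP t x) (at t within {\<tau>1..\<tau>2})"
      using smooth_facts[OF lt smoothP dPt dPx dPxx] by blast
    obtain MQ where cQ: "continuous_on ({\<tau>1..\<tau>2} \<times> UNIV) (\<lambda>(t, x). Q t x)"
      and cQt: "continuous_on ({\<tau>1..\<tau>2} \<times> UNIV) (\<lambda>(t, x). Qt t x)"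
      and cQx: "continuous_on ({\<tau>1..\<tau>2} \<times> UNIV) (\<lambda>(t, x). Qx t x)"
      and cQxx: "continuous_on ({\<tau>1..\<tau>2} \<times> UNIV) (\<lambda>(t, x). Qxx t x)"
      and cMQ: "continuous_on ({\<tau>1..\<tau>2} \<times> UNIV) (\<lambda>(t, x). MQ t x)"
      and dQtx: "\<forall>t\<in>{\<tau>1..\<tau>2}. \<forall>x. ((\<lambda>y. Qt t y) has_real_derivative MQ t x) (at x)"
      and dQxt: "\<forall>t\<in>{\<tau>1..\<tau>2}. \<forall>x. ((\<lambda>s. Qx s x) has_real_derivative MQ t x) (at t within {\<tau>1..\<tau>2})"
      using smooth_facts[OF lt smoothQ dQt dQx dQxx] by blast
    have pPd: "\<forall>t\<in>{\<tau>1..\<tau>2}. \<forall>x. Pt t (x + 2 * pi) = Pt t x \<and> Px t (x + 2 * pi) = Px t x"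
      by (rule per_derivs[OF lt perP dPt dPx])
    have pQd: "\<forall>t\<in>{\<tau>1..\<tau>2}. \<forall>x. Qt t (x + 2 * pi) = Qt t x \<and> Qx t (x + 2 * pi) = Qx t x"
      by (rule per_derivs[OF lt perQ dQt dQx])
    define W1 where "W1 = Wg 1 P Pt Px Qt Qx"
    define W2 where "W2 = Wg (-1) P Pt Px Qt Qx"
    define u where "u t x = t^2 * W1 t x" for t x
    define v where "v t x = t^2 * W2 t x" for t x
    define k where "k t = (1 - 2/t)/2" for t :: real
    have cu: "continuous_on ({\<tau>1..\<tau>2} \<times> UNIV) (\<lambda>(t, x). u t x)"
      unfolding u_def W1_def using cont_W[OF _ cP cPt cPx cQt cQx] t1 by simp
    have cv: "continuous_on ({\<tau>1..\<tau>2} \<times> UNIV) (\<lambda>(t, x). v t x)"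
      unfolding v_def W2_def using cont_W[OF _ cP cPt cPx cQt cQx] t1 by simp
    have pW1: "\<forall>t\<in>{\<tau>1..\<tau>2}. \<forall>x. W1 t (x + 2 * pi) = W1 t x"
      using perP pPd pQd by (simp add: W1_def Wg_def)
    have pW2: "\<forall>t\<in>{\<tau>1..\<tau>2}. \<forall>x. W2 t (x + 2 * pi) = W2 t x"
      using perP pPd pQd by (simp add: W2_def Wg_def)
    have pu: "\<forall>t\<in>{\<tau>1..\<tau>2}. \<forall>x. u t (x + 2 * pi) = u t x"
      using pW1 by (simp add: u_def)
    have pv: "\<forall>t\<in>{\<tau>1..\<tau>2}. \<forall>x. v t (x + 2 * pi) = v t x"
      using pW2 by (simp add: v_def)
    have kpos: "\<forall>t\<in>{\<tau>1..\<tau>2}. 0 \<le> k t"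
      using t1 by (auto simp: k_def field_simps)
    have du: "\<forall>t\<in>{\<tau>1..\<tau>2}. \<forall>c. \<exists>d. ((\<lambda>s. u s (c + exp (-s))) has_real_derivative d) (at t within {\<tau>1..\<tau>2})
                 \<and> d \<le> k t * (v t (c + exp (-t)) - u t (c + exp (-t)))"
    proof (intro ballI allI)
      fix t c assume t: "t \<in> {\<tau>1..\<tau>2}"
      show "\<exists>d. ((\<lambda>s. u s (c + exp (-s))) has_real_derivative d) (at t within {\<tau>1..\<tau>2})
                 \<and> d \<le> k t * (v t (c + exp (-t)) - u t (c + exp (-t)))"
        using char_deriv[OF t1 dPt dPx dPtt dPtx dPxt dPxx dQtt dQtx dQxt dQxx cPx cMP cPxx cMQ cQxx eqP eqQ Pbd, of 1 t c] t
        by (simp add: u_def v_def W1_def W2_def k_def algebra_simps)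
    qed
    have dv: "\<forall>t\<in>{\<tau>1..\<tau>2}. \<forall>c. \<exists>d. ((\<lambda>s. v s (c - exp (-s))) has_real_derivative d) (at t within {\<tau>1..\<tau>2})
                 \<and> d \<le> k t * (u t (c - exp (-t)) - v t (c - exp (-t)))"
    proof (intro ballI allI)
      fix t c assume t: "t \<in> {\<tau>1..\<tau>2}"
      show "\<exists>d. ((\<lambda>s. v s (c - exp (-s))) has_real_derivative d) (at t within {\<tau>1..\<tau>2})
                 \<and> d \<le> k t * (u t (c - exp (-t)) - v t (c - exp (-t)))"
        using char_deriv[OF t1 dPt dPx dPtt dPtx dPxt dPxx dQtt dQtx dQxt dQxx cPx cMP cPxx cMQ cQxx eqP eqQ Pbd, of "-1" t c] t
        by (simp add: u_def v_def W1_def W2_def k_def algebra_simps)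
    qed
    define S1 where "S1 = (SUP \<theta>. W1 \<tau>1 \<theta>)"
    define S2 where "S2 = (SUP \<theta>. W2 \<tau>1 \<theta>)"
    define M0 where "M0 = \<tau>1^2 * S1"
    define N0 where "N0 = \<tau>1^2 * S2"
    define g where "g t = exp (-(t - \<tau>1)) * (t / \<tau>1)^2" for t
    define \<alpha> where "\<alpha> t = (M0 + N0)/2 + (M0 - N0)/2 * g t" for t
    define \<beta> where "\<beta> t = (M0 + N0)/2 - (M0 - N0)/2 * g t" for t
    have t10: "\<tau>1 \<noteq> 0" using t1 by simp
    have dg: "(g has_real_derivative - 2 * k s * g s) (at s within {\<tau>1..\<tau>2})" if s: "s \<in> {\<tau>1..\<tau>2}" for s
    proof -
      have s0: "s \<noteq> 0" using s t1 by auto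
      show ?thesis unfolding g_def k_def
        apply (rule derivative_eq_intros refl t10)+
        using s0 t10 by (simp add: field_simps power2_eq_square)
    qed
    have dal: "\<forall>t\<in>{\<tau>1..\<tau>2}. (\<alpha> has_real_derivative k t * (\<beta> t - \<alpha> t)) (at t within {\<tau>1..\<tau>2})"
    proof
      fix t assume t: "t \<in> {\<tau>1..\<tau>2}"
      show "(\<alpha> has_real_derivative k t * (\<beta> t - \<alpha> t)) (at t within {\<tau>1..\<tau>2})"
        unfolding \<alpha>_def[abs_def]
        apply (rule derivative_eq_intros refl dg[OF t])+
        by (simp add: \<alpha>_def \<beta>_def field_simps)
    qed
    have dbe: "\<forall>t\<in>{\<tau>1..\<tau>2}. (\<beta> has_real_derivative k t * (\<alpha> t - \<beta> t)) (at t within {\<tau>1..\<tau>2})"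
    proof
      fix t assume t: "t \<in> {\<tau>1..\<tau>2}"
      show "(\<beta> has_real_derivative k t * (\<alpha> t - \<beta> t)) (at t within {\<tau>1..\<tau>2})"
        unfolding \<beta>_def[abs_def]
        apply (rule derivative_eq_intros refl dg[OF t])+
        by (simp add: \<alpha>_def \<beta>_def field_simps)
    qed
    have cg: "continuous_on {\<tau>1..\<tau>2} g" unfolding g_def using t10 by (intro continuous_intros) auto
    have ca: "continuous_on {\<tau>1..\<tau>2} \<alpha>" unfolding \<alpha>_def[abs_def] using cg by (intro continuous_intros)
    have cb: "continuous_on {\<tau>1..\<tau>2} \<beta>" unfolding \<beta>_def[abs_def] using cg by (intro continuous_intros)
    have t1I: "\<tau>1 \<in> {\<tau>1..\<tau>2}" using t12 by simp
    have bd1: "bdd_above (range (W1 \<tau>1))"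
    proof (rule bdd_per)
      show "continuous_on UNIV (W1 \<tau>1)"
        using cont_slice_x[OF cont_W0[OF _ cP cPt cPx cQt cQx, of 1] t1I] t1 unfolding W1_def by simp
      show "\<forall>x. W1 \<tau>1 (x + 2 * pi) = W1 \<tau>1 x" using pW1 t1I by blast
    qed
    have bd2: "bdd_above (range (W2 \<tau>1))"
    proof (rule bdd_per)
      show "continuous_on UNIV (W2 \<tau>1)"
        using cont_slice_x[OF cont_W0[OF _ cP cPt cPx cQt cQx, of "-1"] t1I] t1 unfolding W2_def by simp
      show "\<forall>x. W2 \<tau>1 (x + 2 * pi) = W2 \<tau>1 x" using pW2 t1I by blast
    qed
    have g1: "g \<tau>1 = 1" unfolding g_def using t10 by simp
    have a1: "\<alpha> \<tau>1 = M0" unfolding \<alpha>_def g1 by (simp add: field_simps)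
    have b1: "\<beta> \<tau>1 = N0" unfolding \<beta>_def g1 by (simp add: field_simps)
    have iu: "\<forall>x. u \<tau>1 x \<le> \<alpha> \<tau>1"
    proof
      fix x
      have "W1 \<tau>1 x \<le> S1" unfolding S1_def by (rule cSUP_upper[OF UNIV_I bd1])
      then show "u \<tau>1 x \<le> \<alpha> \<tau>1" unfolding u_def a1 M0_def by (intro mult_left_mono) auto
    qed
    have iv: "\<forall>x. v \<tau>1 x \<le> \<beta> \<tau>1"
    proof
      fix x
      have "W2 \<tau>1 x \<le> S2" unfolding S2_def by (rule cSUP_upper[OF UNIV_I bd2])
      then show "v \<tau>1 x \<le> \<beta> \<tau>1" unfolding v_def b1 N0_def by (intro mult_left_mono) auto
    qed
    have mp: "\<forall>t\<in>{\<tau>1..\<tau>2}. \<forall>x. u t x \<le> \<alpha> t \<and> v t x \<le> \<beta> t"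
      by (rule maxprin[OF lt cu cv pu pv kpos du dv dal dbe ca cb iu iv])
    have Fe: "?F s = 1/2 * (SUP \<theta>. W1 s \<theta>) + 1/2 * (SUP \<theta>. W2 s \<theta>)" for s
      unfolding F_energy_def W1_def W2_def Wg_def by simp
    have tp: "0 < t" using t t1 by auto
    have sup1: "(SUP \<theta>. W1 t \<theta>) \<le> \<alpha> t / t^2"
    proof (rule cSUP_least)
      fix x
      have "t^2 * W1 t x \<le> \<alpha> t" using mp t unfolding u_def by blast
      then show "W1 t x \<le> \<alpha> t / t^2" using tp by (simp add: field_simps)
    qed simp
    have sup2: "(SUP \<theta>. W2 t \<theta>) \<le> \<beta> t / t^2"
    proof (rule cSUP_least)
      fix x
      have "t^2 * W2 t x \<le> \<beta> t" using mp t unfolding v_def by blast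
      then show "W2 t x \<le> \<beta> t / t^2" using tp by (simp add: field_simps)
    qed simp
    have "?F t \<le> 1/2 * (\<alpha> t / t^2) + 1/2 * (\<beta> t / t^2)"
      unfolding Fe using sup1 sup2 by linarith
    also have "\<dots> = (\<alpha> t + \<beta> t) / (2 * t^2)"
      by (simp add: add_divide_distrib)
    also have "\<dots> = (M0 + N0) / (2 * t^2)"
      unfolding \<alpha>_def \<beta>_def by simp
    also have "\<dots> = ?F \<tau>1 * (\<tau>1 / t)^2"
      unfolding Fe M0_def N0_def S1_def S2_def using tp by (simp add: field_simps power2_eq_square)
    finally show ?thesis .
  qed
qed

end
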